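(* Let $T$ be an open cone with basepoint $b\in T$, let $x,y\in T$, let $z\in\partial T$, and put $y_\lambda:=(1-\lambda)z+\lambda y$ for $\lambda\in(0,1)$. Then (i) $F_T(x,y_\lambda)-F_{\tau(T,z)}(x,y_\lambda)\to0$ as $\lambda\searrow0$; (ii) $y_\lambda$ converges in the $F_T$-sense to $f_{\tau(T,z),y}|_T$ as $\lambda\searrow0$, i.e. $F_T(\cdot,y_\lambda)-F_T(b,y_\lambda)\to f_{\tau(T,z),y}|_T$ pointwise on $T$; (iii) if moreover $z\notin[0]_T$, then the pointwise closure of $\{h|_T: h\in\mathcal K_{\tau(T,z)}\}$ is contained in $\overline{\mathcal K_T}\cap A_T(z)$.
   Context: $V$ is a finite-dimensional real vector space. An open cone is a nonempty open convex set $T\subset V$ with $\lambda T\subseteq T$ for all $\lambda>0$ and $0\notin T$; $\partial T$ its boundary in $V$. Write $x\le_T y$ iff $y-x\in\overline T$, $[0]_T:=\overline T\cap(-\overline T)$. $M_T(y/x):=\inf\{\lambda>0:y\le_T\lambda x\}$, $F_T(y,x):=\log M_T(y/x)$. Open tangent cone: $\tau(T,z):=\{\lambda(w-z):\lambda>0,\ w\in T\}$ (it is an open cone containing $T$). For an open cone $S\ni b$ and $p\in S$, $f_{S,p}(x):=F_S(x,p)-F_S(b,p)$, $x\in S$; $\mathcal K_S:=\{f_{S,p}:p\in S\}$ and $\overline{\mathcal K_S}$ is its closure in the topology of pointwise convergence on $S$. A sequence $(x_n)$ in $T$ converges in the Funk sense to $g$ if $F_T(\cdot,x_n)-F_T(b,x_n)\to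 g$ pointwise on $T$; a Funk horofunction is such a limit not in $\mathcal K_T$. For $z\in\partial T\setminus[0]_T$, $A_T(z)$ is the set of Funk horofunctions on $T$ that are Funk-sense limits of sequences in $T$ converging to $z$ in the usual topology. *)

theory Defs
  imports "HOL-Analysis.Analysis"
begin

definition open_cone :: "'a::euclidean_space set \<Rightarrow> bool" where
  "open_cone T \<longleftrightarrow> T \<noteq> {} \<and> open T \<and> convex T \<and>
     (\<forall>l>0. \<forall>x\<in>T. l *\<^sub>R x \<in> T) \<and> 0 \<notin> T"

definition cone_le :: "'a::euclidean_space set \<Rightarrow> 'a \<Rightarrow> 'a \<Rightarrow> bool" where
  "cone_le T x y \<longleftrightarrow> y - x \<in> closure T"

definition zero_part :: "'a::euclidean_space set \<Rightarrow> 'a set" where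
  "zero_part T = closure T \<inter> uminus ` closure T"

definition funk_M :: "'a::euclidean_space set \<Rightarrow> 'a \<Rightarrow> 'a \<Rightarrow> real" where
  "funk_M T y x = Inf {l. l > 0 \<and> cone_le T y (l *\<^sub>R x)}"

definition funk_F :: "'a::euclidean_space set \<Rightarrow> 'a \<Rightarrow> 'a \<Rightarrow> real" where
  "funk_F T y x = ln (funk_M T y x)"

definition tangent_cone :: "'a::euclidean_space set \<Rightarrow> 'a \<Rightarrow> 'a set" where
  "tangent_cone T z = {l *\<^sub>R (w - z) | l w. l > 0 \<and> w \<in> T}"

definition funk_f :: "'a::euclidean_space set \<Rightarrow> 'a \<Rightarrow> 'a \<Rightarrow> 'a \<Rightarrow> real" where
  "funk_f S b p x = funk_F S x p - funk_F S b p"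

text \<open>K_S = {f_{S,p} : p \<in> S}; functions are only meaningful on S.\<close>
definition funk_K :: "'a::euclidean_space set \<Rightarrow> 'a \<Rightarrow> ('a \<Rightarrow> real) set" where
  "funk_K S b = {funk_f S b p | p. p \<in> S}"

text \<open>Closure in the topology of pointwise convergence on S (product topology on
  real^S): g is in the closure of A iff every basic neighbourhood (finitely many points
  of S, tolerance e) meets A. Values outside S are irrelevant.\<close>
definition pw_closure :: "'a set \<Rightarrow> ('a \<Rightarrow> real) set \<Rightarrow> ('a \<Rightarrow> real) set" where
  "pw_closure S A = {g. \<forall>P. P \<subseteq> S \<longrightarrow> finite P \<longrightarrow> (\<forall>e>0. \<exists>h\<in>A. \<forall>x\<in>P. \<bar>h x - g x\<bar> < e)}"

definition funk_conv :: "'a::euclidean_space set \<Rightarrow> 'a \<Rightarrow> (nat \<Rightarrow> 'a) \<Rightarrow> ('a \<Rightarrow> real) \<Rightarrow> bool" where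
  "funk_conv T b xs g \<longleftrightarrow>
     (\<forall>w\<in>T. ((\<lambda>n. funk_F T w (xs n) - funk_F T b (xs n)) \<longlongrightarrow> g w) sequentially)"

definition funk_horofunction :: "'a::euclidean_space set \<Rightarrow> 'a \<Rightarrow> ('a \<Rightarrow> real) \<Rightarrow> bool" where
  "funk_horofunction T b g \<longleftrightarrow>
     (\<exists>xs. (\<forall>n. xs n \<in> T) \<and> funk_conv T b xs g) \<and>
     \<not> (\<exists>p\<in>T. \<forall>w\<in>T. g w = funk_f T b p w)"

definition funk_A :: "'a::euclidean_space set \<Rightarrow> 'a \<Rightarrow> 'a \<Rightarrow> ('a \<Rightarrow> real) set" where
  "funk_A T b z = {g. funk_horofunction T b g \<and>
     (\<exists>xs. (\<forall>n. xs n \<in> T) \<and> xs \<longlonglongrightarrow> z \<and> funk_conv T b xs g)}"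

end

theory Submission
  imports Defs
begin

lemma seq_closure:
  fixes f :: "nat \<Rightarrow> 'a::euclidean_space"
  assumes "\<And>n. f n \<in> S" "f \<longlonglongrightarrow> l" shows "l \<in> closure S"
  unfolding closure_sequential by (rule exI[of _ f]) (use assms in blast)

lemma oc_basic:
  assumes "open_cone T"
  shows "T \<noteq> {}" "open T" "convex T" "\<And>l x. l > 0 \<Longrightarrow> x \<in> T \<Longrightarrow> l *\<^sub>R x \<in> T" "0 \<notin> T"
  using assms unfolding open_cone_def by auto

lemma oc_zero_closure:
  assumes "open_cone T" shows "0 \<in> closure T"
proof -
  obtain w where w: "w \<in> T" using oc_basic[OF assms] by blast
  have "(\<lambda>n. inverse (real (Suc n)) *\<^sub>R w) \<longlonglongrightarrow> 0 *\<^sub>R w"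
    by (rule tendsto_scaleR[OF LIMSEQ_inverse_real_of_nat tendsto_const])
  then have "(\<lambda>n. inverse (real (Suc n)) *\<^sub>R w) \<longlonglongrightarrow> 0" by simp
  moreover have "\<forall>n. inverse (real (Suc n)) *\<^sub>R w \<in> T"
  proof
    fix n show "inverse (real (Suc n)) *\<^sub>R w \<in> T" by (rule oc_basic(4)[OF assms _ w]) simp
  qed
  ultimately show ?thesis by (intro seq_closure[of "\<lambda>n. inverse (real (Suc n)) *\<^sub>R w"]) auto
qed

lemma oc_closure_scale:
  assumes "open_cone T" "l \<ge> 0" "x \<in> closure T" shows "l *\<^sub>R x \<in> closure T"
proof (cases "l = 0")
  case True then show ?thesis using oc_zero_closure[OF assms(1)] by simp
next
  case False
  then have l: "l > 0" using assms by simp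
  have "l *\<^sub>R x \<in> (*\<^sub>R) l ` closure T" using assms by auto
  also have "\<dots> = closure ((*\<^sub>R) l ` T)" by (simp add: closure_scaleR)
  also have "\<dots> \<subseteq> closure T" by (rule closure_mono) (use oc_basic(4)[OF assms(1) l] in blast)
  finally show ?thesis .
qed

lemma oc_add:
  assumes "open_cone T" "w \<in> T" "c \<in> closure T" shows "w + c \<in> T"
proof (cases "w = c")
  case True
  have "2 *\<^sub>R w \<in> T" by (rule oc_basic(4)[OF assms(1) _ assms(2)]) simp
  then show ?thesis using True by (simp add: scaleR_2)
next
  case False
  have int: "interior T = T" using oc_basic(2)[OF assms(1)] by (simp add: interior_open)
  have "midpoint w c \<in> open_segment w c" using False by (simp add: midpoint_in_open_segment)
  also have "\<dots> \<subseteq> T" using in_interior_closure_convex_segment[OF oc_basic(3)[OF assms(1)], of w c] assms int by simp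
  finally have "2 *\<^sub>R midpoint w c \<in> T" by (rule oc_basic(4)[OF assms(1), rotated]) simp
  then show ?thesis by (simp add: midpoint_def scaleR_add_right)
qed

lemma oc_closure_add:
  assumes "open_cone T" "c \<in> closure T" "d \<in> closure T" shows "c + d \<in> closure T"
proof -
  obtain f where f: "\<And>n. f n \<in> T" "f \<longlonglongrightarrow> c"
    using assms(2) unfolding closure_sequential by blast
  have "\<forall>n. f n + d \<in> T" using oc_add[OF assms(1) f(1) assms(3)] by blast
  moreover have "(\<lambda>n. f n + d) \<longlonglongrightarrow> c + d" by (intro tendsto_intros f(2))
  ultimately show ?thesis by (intro seq_closure[of "\<lambda>n. f n + d"]) auto
qed

lemma oc_neg:
  assumes "open_cone T" "x \<in> T" shows "- x \<notin> closure T"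
proof
  assume "- x \<in> closure T"
  from oc_add[OF assms this] have "0 \<in> T" by simp
  with oc_basic(5)[OF assms(1)] show False by blast
qed

lemma M_bdd: "bdd_below {l. l > 0 \<and> cone_le S y (l *\<^sub>R x)}"
  by (rule bdd_belowI[of _ 0]) auto

lemma M_lower:
  assumes "l > 0" "l *\<^sub>R x - y \<in> closure S" shows "funk_M S y x \<le> l"
  unfolding funk_M_def by (rule cInf_lower) (use assms M_bdd in \<open>auto simp: cone_le_def\<close>)

lemma M_ne:
  assumes "open_cone S" "x \<in> S" shows "\<exists>l>0. l *\<^sub>R x - y \<in> S"
proof -
  obtain r where r: "r > 0" "ball x r \<subseteq> S"
    using oc_basic(2)[OF assms(1)] assms(2) open_contains_ball by blast
  define l where "l = (norm y + 1) / r"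
  have l: "l > 0" using r unfolding l_def by (intro divide_pos_pos add_nonneg_pos) auto
  have "norm ((1/l) *\<^sub>R y) = r * norm y / (norm y + 1)" using r l by (simp add: l_def)
  also have "\<dots> < r"
  proof -
    have p: "0 < norm y + 1" using norm_ge_zero[of y] by linarith
    have "r * norm y < r * (norm y + 1)" using r(1) by simp
    then show ?thesis using p by (simp add: pos_divide_less_eq)
  qed
  finally have "x - (1/l) *\<^sub>R y \<in> S" using r by (auto simp: dist_norm)
  then have "l *\<^sub>R (x - (1/l) *\<^sub>R y) \<in> S" using oc_basic(4)[OF assms(1) l] by blast
  then show ?thesis using l by (auto simp: scaleR_diff_right)
qed

lemma M_ne_set:
  assumes "open_cone S" "x \<in> S" shows "{l. l > 0 \<and> cone_le S y (l *\<^sub>R x)} \<noteq> {}"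
  using M_ne[OF assms, of y] closure_subset by (auto simp: cone_le_def)

lemma M_greatest:
  assumes "open_cone S" "x \<in> S" "\<And>l. l > 0 \<Longrightarrow> l *\<^sub>R x - y \<in> closure S \<Longrightarrow> a \<le> l"
  shows "a \<le> funk_M S y x"
  unfolding funk_M_def by (rule cInf_greatest) (use assms M_ne_set[OF assms(1,2)] in \<open>auto simp: cone_le_def\<close>)

lemma M_nonneg: assumes "open_cone S" "x \<in> S" shows "0 \<le> funk_M S y x"
  by (rule M_greatest[OF assms]) simp

lemma M_above:
  assumes "open_cone S" "x \<in> S" "funk_M S y x < l" shows "l *\<^sub>R x - y \<in> S"
proof -
  have "Inf {l. l > 0 \<and> cone_le S y (l *\<^sub>R x)} < l" using assms(3) unfolding funk_M_def .
  then obtain l' where "l' \<in> {l. l > 0 \<and> cone_le S y (l *\<^sub>R x)}" "l' < l"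
    using cInf_less_iff[OF M_ne_set[OF assms(1,2), of y] M_bdd[of S y x]] by blast
  then have l': "l' > 0" "l' *\<^sub>R x - y \<in> closure S" "l' < l" by (auto simp: cone_le_def)
  have "(l - l') *\<^sub>R x \<in> S" using oc_basic(4)[OF assms(1)] l' assms(2) by simp
  from oc_add[OF assms(1) this l'(2)] show ?thesis by (simp add: algebra_simps)
qed

lemma M_pos:
  assumes "open_cone S" "x \<in> S" "y \<in> S" shows "0 < funk_M S y x"
proof -
  obtain r where r: "r > 0" "ball y r \<subseteq> S"
    using oc_basic(2)[OF assms(1)] assms(3) open_contains_ball by blast
  define d where "d = r / (norm x + 1)"
  have d: "d > 0" using r unfolding d_def by (intro divide_pos_pos add_nonneg_pos) auto
  have "d \<le> funk_M S y x"
  proof (rule M_greatest[OF assms(1,2)])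
    fix l assume l: "l > 0" "l *\<^sub>R x - y \<in> closure S"
    show "d \<le> l"
    proof (rule ccontr)
      assume "\<not> d \<le> l"
      then have "l < d" by simp
      have nx: "norm x + 1 > 0" using norm_ge_zero[of x] by linarith
      have "norm (l *\<^sub>R x) = l * norm x" using l by simp
      also have "\<dots> \<le> l * (norm x + 1)" using l by simp
      also have "\<dots> < d * (norm x + 1)" using \<open>l < d\<close> nx by (intro mult_strict_right_mono) auto
      also have "\<dots> = r" using nx by (simp add: d_def)
      finally have "y - l *\<^sub>R x \<in> S" using r by (auto simp: dist_norm)
      from oc_add[OF assms(1) this l(2)] oc_basic(5)[OF assms(1)] show False by simp
    qed
  qed
  with d show ?thesis by simp
qed

lemma M_le_dense:
  assumes "a \<ge> 0" "\<And>l. l > a \<Longrightarrow> l *\<^sub>R x - y \<in> closure S" shows "funk_M S y x \<le> a"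
proof (rule dense_ge)
  fix l assume "a < l" then show "funk_M S y x \<le> l" using assms by (intro M_lower) auto
qed

lemma M_scale:
  assumes "open_cone S" "x \<in> S" "c > 0" shows "funk_M S y (c *\<^sub>R x) = funk_M S y x / c"
proof (rule antisym)
  have cx: "c *\<^sub>R x \<in> S" using oc_basic(4)[OF assms(1) assms(3,2)] .
  have "c * funk_M S y (c *\<^sub>R x) \<le> funk_M S y x"
  proof (rule dense_ge)
    fix l assume l: "funk_M S y x < l"
    have l0: "l > 0" using l M_nonneg[OF assms(1,2), of y] by simp
    have "l *\<^sub>R x - y \<in> closure S" using M_above[OF assms(1,2) l] closure_subset by blast
    then have "(l / c) *\<^sub>R (c *\<^sub>R x) - y \<in> closure S" using assms(3) by simp
    then have "funk_M S y (c *\<^sub>R x) \<le> l / c" using l0 assms(3) by (intro M_lower) auto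
    then show "c * funk_M S y (c *\<^sub>R x) \<le> l" using assms(3) by (simp add: field_simps)
  qed
  then show "funk_M S y (c *\<^sub>R x) \<le> funk_M S y x / c" using assms(3) by (simp add: field_simps)
  have "funk_M S y x \<le> c * funk_M S y (c *\<^sub>R x)"
  proof -
    have "funk_M S y x / c \<le> funk_M S y (c *\<^sub>R x)"
    proof (rule M_greatest[OF assms(1) cx])
      fix l assume l: "l > 0" "l *\<^sub>R c *\<^sub>R x - y \<in> closure S"
      then have "funk_M S y x \<le> l * c" using assms(3) by (intro M_lower) auto
      then show "funk_M S y x / c \<le> l" using assms(3) by (simp add: field_simps)
    qed
    then show ?thesis using assms(3) by (simp add: field_simps)
  qed
  then show "funk_M S y x / c \<le> funk_M S y (c *\<^sub>R x)" using assms(3) by (simp add: field_simps)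
qed

lemma M_mono:
  assumes "open_cone T" "x \<in> T" "closure T \<subseteq> closure S"
  shows "funk_M S y x \<le> funk_M T y x"
  by (rule M_greatest[OF assms(1,2)]) (use assms(3) M_lower in blast)

lemma M_triangle:
  assumes T: "open_cone T" and S: "open_cone S" and TS: "T \<subseteq> S"
    and a: "a \<in> T" and b: "b \<in> T" and c: "c \<in> S"
  shows "funk_M S a c \<le> funk_M T a b * funk_M S b c"
proof -
  define A where "A = funk_M T a b"
  define B where "B = funk_M S b c"
  have A0: "A \<ge> 0" unfolding A_def by (rule M_nonneg[OF T b])
  have B0: "B \<ge> 0" unfolding B_def using M_nonneg[OF S c] .
  have ev: "eventually (\<lambda>d. funk_M S a c \<le> (A + d) * (B + d)) (at_right 0)"
    unfolding eventually_at_right_field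
  proof (intro exI[of _ 1] conjI allI impI)
    fix d :: real assume d: "0 < d" "d < 1"
    have l2: "(B + d) *\<^sub>R c - b \<in> S" using M_above[OF S c, of b "B + d"] d by (simp add: B_def)
    have l1: "(A + d) *\<^sub>R b - a \<in> S" using M_above[OF T b, of a "A + d"] d TS by (auto simp: A_def)
    have "(A + d) *\<^sub>R ((B + d) *\<^sub>R c - b) \<in> S" using oc_basic(4)[OF S _ l2, of "A + d"] A0 d by simp
    from oc_add[OF S this closure_subset[THEN subsetD, OF l1]]
    have "((A + d) * (B + d)) *\<^sub>R c - a \<in> S" by (simp add: algebra_simps)
    then show "funk_M S a c \<le> (A + d) * (B + d)"
      using A0 B0 d by (intro M_lower) (use closure_subset in \<open>auto intro!: add_nonneg_pos mult_pos_pos\<close>)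
  qed simp
  have lim: "((\<lambda>d. (A + d) * (B + d)) \<longlongrightarrow> (A + 0) * (B + 0)) (at_right 0)"
    by (rule tendsto_mult[OF tendsto_add[OF tendsto_const tendsto_ident_at] tendsto_add[OF tendsto_const tendsto_ident_at]])
  have "funk_M S a c \<le> (A + 0) * (B + 0)"
    by (rule tendsto_lowerbound[OF lim ev]) simp
  then show ?thesis by (simp add: A_def B_def)
qed

lemma fr_props:
  assumes "open_cone T" "z \<in> frontier T" shows "z \<in> closure T" "z \<notin> T"
  using assms oc_basic(2)[OF assms(1)] unfolding frontier_def by (auto simp: interior_open)

lemma tc_memI: "l > 0 \<Longrightarrow> w \<in> T \<Longrightarrow> l *\<^sub>R (w - z) \<in> tangent_cone T z"
  unfolding tangent_cone_def by blast

lemma tc_memE: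
  assumes "v \<in> tangent_cone T z"
  obtains l w where "l > 0" "w \<in> T" "v = l *\<^sub>R (w - z)"
  using assms unfolding tangent_cone_def by blast

lemma tc_open_cone:
  assumes T: "open_cone T" and z: "z \<in> frontier T"
  shows "open_cone (tangent_cone T z)"
  unfolding open_cone_def
proof (intro conjI allI impI ballI)
  obtain w where w: "w \<in> T" using oc_basic(1)[OF T] by blast
  show "tangent_cone T z \<noteq> {}" using tc_memI[of 1 w T z] w by auto
next
  show "open (tangent_cone T z)"
  proof (rule openI)
    fix v assume "v \<in> tangent_cone T z"
    then obtain l w where lw: "l > 0" "w \<in> T" "v = l *\<^sub>R (w - z)" by (rule tc_memE)
    obtain r where r: "r > 0" "ball w r \<subseteq> T"
      using open_contains_ball oc_basic(2)[OF T] lw(2) by blast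
    show "\<exists>e>0. ball v e \<subseteq> tangent_cone T z"
    proof (intro exI[of _ "l * r"] conjI subsetI)
      show "l * r > 0" using lw r by simp
      fix v' assume "v' \<in> ball v (l * r)"
      then have d: "norm (v' - v) < l * r" by (simp add: dist_norm norm_minus_commute)
      define w' where "w' = w + (1/l) *\<^sub>R (v' - v)"
      have "dist w w' = norm (v' - v) / l" using lw(1) by (simp add: w'_def dist_norm)
      also have "\<dots> < r" using d lw(1) by (simp add: pos_divide_less_eq mult.commute)
      finally have w': "w' \<in> T" using r by auto
      have "v' = l *\<^sub>R (w' - z)" using lw by (simp add: w'_def algebra_simps)
      then show "v' \<in> tangent_cone T z" using tc_memI[OF lw(1) w', of z] by simp
    qed
  qed
next
  show "convex (tangent_cone T z)"
  proof (rule convexI)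
    fix x y :: 'a and u v :: real
    assume x: "x \<in> tangent_cone T z" and y: "y \<in> tangent_cone T z"
      and uv: "0 \<le> u" "0 \<le> v" "u + v = 1"
    obtain l1 w1 where 1: "l1 > 0" "w1 \<in> T" "x = l1 *\<^sub>R (w1 - z)" using x by (rule tc_memE)
    obtain l2 w2 where 2: "l2 > 0" "w2 \<in> T" "y = l2 *\<^sub>R (w2 - z)" using y by (rule tc_memE)
    define L where "L = u * l1 + v * l2"
    have L: "L > 0"
    proof (cases "u > 0")
      case True
      then have "u * l1 > 0" using 1 by simp
      moreover have "v * l2 \<ge> 0" using uv 2 by simp
      ultimately show ?thesis unfolding L_def by linarith
    next
      case False
      then have "u = 0" using uv by simp
      then show ?thesis using uv 2 by (simp add: L_def)
    qed
    define w where "w = (u * l1 / L) *\<^sub>R w1 + (v * l2 / L) *\<^sub>R w2"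
    have "w \<in> T" unfolding w_def
    proof (rule convexD[OF oc_basic(3)[OF T] 1(2) 2(2)])
      show "0 \<le> u * l1 / L" using uv 1 L by simp
      show "0 \<le> v * l2 / L" using uv 2 L by simp
      show "u * l1 / L + v * l2 / L = 1" using L by (simp add: L_def add_divide_distrib[symmetric])
    qed
    have e1: "L *\<^sub>R w = (u * l1) *\<^sub>R w1 + (v * l2) *\<^sub>R w2"
      using L by (simp add: w_def scaleR_add_right)
    have "L *\<^sub>R (w - z) = (u * l1) *\<^sub>R w1 + (v * l2) *\<^sub>R w2 - (u * l1 + v * l2) *\<^sub>R z"
      using e1 by (simp add: scaleR_diff_right L_def)
    also have "\<dots> = u *\<^sub>R x + v *\<^sub>R y" unfolding 1(3) 2(3) by (simp add: algebra_simps)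
    finally show "u *\<^sub>R x + v *\<^sub>R y \<in> tangent_cone T z"
      using tc_memI[OF L \<open>w \<in> T\<close>, of z] by simp
  qed
next
  fix l :: real and v assume l: "l > 0" and v: "v \<in> tangent_cone T z"
  obtain m w where mw: "m > 0" "w \<in> T" "v = m *\<^sub>R (w - z)" using v by (rule tc_memE)
  have "(l * m) *\<^sub>R (w - z) \<in> tangent_cone T z" using l mw by (intro tc_memI) auto
  then show "l *\<^sub>R v \<in> tangent_cone T z" using mw by simp
next
  show "0 \<notin> tangent_cone T z"
  proof
    assume "0 \<in> tangent_cone T z"
    then obtain l w where lw: "l > 0" "w \<in> T" "0 = l *\<^sub>R (w - z)" by (rule tc_memE)
    then have "w = z" by simp
    then show False using lw(2) fr_props(2)[OF T z] by simp
  qed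
qed

lemma T_sub_tc:
  assumes T: "open_cone T" and z: "z \<in> frontier T"
  shows "T \<subseteq> tangent_cone T z"
proof
  fix w assume w: "w \<in> T"
  have "w + z \<in> T" by (rule oc_add[OF T w fr_props(1)[OF T z]])
  from tc_memI[of 1, OF _ this, of z] show "w \<in> tangent_cone T z" by simp
qed

lemma z_cl_tc:
  assumes T: "open_cone T" and z: "z \<in> frontier T"
  shows "z \<in> closure (tangent_cone T z)" "- z \<in> closure (tangent_cone T z)"
proof -
  obtain w where w: "w \<in> T" using oc_basic(1)[OF T] by blast
  have wn: "inverse (real (Suc n)) *\<^sub>R w \<in> T" for n by (rule oc_basic(4)[OF T _ w]) simp
  have zc: "z \<in> closure T" using fr_props(1)[OF T z] .
  have z2: "2 *\<^sub>R z \<in> closure T" by (rule oc_closure_scale[OF T _ zc]) simp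
  have lim0: "(\<lambda>n. inverse (real (Suc n)) *\<^sub>R w) \<longlonglongrightarrow> 0"
    using tendsto_scaleR[OF LIMSEQ_inverse_real_of_nat tendsto_const, of w] by simp
  have m1: "inverse (real (Suc n)) *\<^sub>R w + z \<in> tangent_cone T z" for n
  proof -
    have "inverse (real (Suc n)) *\<^sub>R w + 2 *\<^sub>R z \<in> T" by (rule oc_add[OF T wn z2])
    from tc_memI[of 1, OF _ this, of z] show ?thesis by (simp add: scaleR_2 algebra_simps)
  qed
  have l1: "(\<lambda>n. inverse (real (Suc n)) *\<^sub>R w + z) \<longlonglongrightarrow> 0 + z"
    by (rule tendsto_add[OF lim0 tendsto_const])
  show "z \<in> closure (tangent_cone T z)"
    using seq_closure[of "\<lambda>n. inverse (real (Suc n)) *\<^sub>R w + z", OF m1] l1 by simp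
  have m2: "inverse (real (Suc n)) *\<^sub>R w - z \<in> tangent_cone T z" for n
    using tc_memI[of 1, OF _ wn, of n z] by simp
  have l2: "(\<lambda>n. inverse (real (Suc n)) *\<^sub>R w - z) \<longlonglongrightarrow> 0 - z"
    by (rule tendsto_diff[OF lim0 tendsto_const])
  show "- z \<in> closure (tangent_cone T z)"
    using seq_closure[of "\<lambda>n. inverse (real (Suc n)) *\<^sub>R w - z", OF m2] l2 by simp
qed

lemma tc_lin:
  assumes T: "open_cone T" and z: "z \<in> frontier T" and v: "v \<in> closure (tangent_cone T z)"
  shows "v + t *\<^sub>R z \<in> closure (tangent_cone T z)"
proof -
  have tc: "open_cone (tangent_cone T z)" by (rule tc_open_cone[OF T z])
  have "t *\<^sub>R z \<in> closure (tangent_cone T z)"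
  proof (cases "t \<ge> 0")
    case True then show ?thesis by (rule oc_closure_scale[OF tc _ z_cl_tc(1)[OF T z]])
  next
    case False
    then have "(- t) *\<^sub>R (- z) \<in> closure (tangent_cone T z)"
      by (intro oc_closure_scale[OF tc _ z_cl_tc(2)[OF T z]]) simp
    then show ?thesis by simp
  qed
  from oc_closure_add[OF tc v this] show ?thesis .
qed

lemma tc_lin_iff:
  assumes T: "open_cone T" and z: "z \<in> frontier T"
  shows "v + t *\<^sub>R z \<in> closure (tangent_cone T z) \<longleftrightarrow> v \<in> closure (tangent_cone T z)"
proof
  assume "v + t *\<^sub>R z \<in> closure (tangent_cone T z)"
  from tc_lin[OF T z this, of "-t"] show "v \<in> closure (tangent_cone T z)" by simp
qed (rule tc_lin[OF T z])

lemma M_tc_lin: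
  assumes T: "open_cone T" and z: "z \<in> frontier T"
  shows "funk_M (tangent_cone T z) (a + s *\<^sub>R z) (x + t *\<^sub>R z) = funk_M (tangent_cone T z) a x"
proof -
  have e: "l *\<^sub>R (x + t *\<^sub>R z) - (a + s *\<^sub>R z) = (l *\<^sub>R x - a) + (l * t - s) *\<^sub>R z" for l
    by (simp add: algebra_simps)
  show ?thesis unfolding funk_M_def cone_le_def e tc_lin_iff[OF T z] ..
qed

lemma M_tc_lin2:
  assumes T: "open_cone T" and z: "z \<in> frontier T"
  shows "funk_M (tangent_cone T z) a (x + t *\<^sub>R z) = funk_M (tangent_cone T z) a x"
  using M_tc_lin[OF T z, of a 0 x t] by simp

lemma M_tc_yz:
  assumes T: "open_cone T" and z: "z \<in> frontier T"
  shows "funk_M (tangent_cone T z) a (y - z) = funk_M (tangent_cone T z) a y"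
  using M_tc_lin2[OF T z, of a y "-1"] by simp

lemma yl_T:
  assumes T: "open_cone T" and z: "z \<in> frontier T" and y: "y \<in> T" and l: "0 < l" "l \<le> 1"
  shows "(1 - l) *\<^sub>R z + l *\<^sub>R y \<in> T"
proof -
  have "l *\<^sub>R y \<in> T" by (rule oc_basic(4)[OF T l(1) y])
  moreover have "(1 - l) *\<^sub>R z \<in> closure T" using l by (intro oc_closure_scale[OF T _ fr_props(1)[OF T z]]) simp
  ultimately have "l *\<^sub>R y + (1 - l) *\<^sub>R z \<in> T" by (rule oc_add[OF T])
  then show ?thesis by (simp add: add.commute)
qed

lemma M_tc_yl:
  assumes T: "open_cone T" and z: "z \<in> frontier T" and y: "y \<in> T" and l: "0 < l"
  shows "funk_M (tangent_cone T z) x ((1 - l) *\<^sub>R z + l *\<^sub>R y) = funk_M (tangent_cone T z) x y / l"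
proof -
  have tc: "open_cone (tangent_cone T z)" by (rule tc_open_cone[OF T z])
  have yz: "y - z \<in> tangent_cone T z" using tc_memI[of 1 y T z] y by simp
  have "(1 - l) *\<^sub>R z + l *\<^sub>R y = l *\<^sub>R (y - z) + 1 *\<^sub>R z" by (simp add: algebra_simps)
  then have "funk_M (tangent_cone T z) x ((1 - l) *\<^sub>R z + l *\<^sub>R y) = funk_M (tangent_cone T z) x (l *\<^sub>R (y - z))"
    using M_tc_lin2[OF T z, of x "l *\<^sub>R (y - z)" 1] by simp
  also have "\<dots> = funk_M (tangent_cone T z) x (y - z) / l" by (rule M_scale[OF tc yz l])
  also have "\<dots> = funk_M (tangent_cone T z) x y / l" using M_tc_yz[OF T z] by simp
  finally show ?thesis .
qed

lemma ln_sandwich: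
  fixes q m e :: real
  assumes "0 < q" "q \<le> m" "m \<le> q * (1 + e/2)" "0 < e"
  shows "\<bar>ln m - ln q\<bar> < e"
proof -
  have m: "m > 0" using assms by simp
  have "ln q \<le> ln m" using assms m by simp
  moreover have "ln m - ln q = ln (m / q)" using m assms(1) by (simp add: ln_div)
  moreover have "ln (m / q) \<le> m / q - 1" using m assms(1) by (intro ln_le_minus_one) simp
  moreover have "m / q \<le> 1 + e/2" using assms(1,3) by (simp add: pos_divide_le_eq mult.commute)
  ultimately show ?thesis using assms(4) by linarith
qed

lemma part_i:
  assumes T: "open_cone T" and z: "z \<in> frontier T" and x: "x \<in> T" and y: "y \<in> T"
  shows "((\<lambda>l. funk_F T x ((1 - l) *\<^sub>R z + l *\<^sub>R y)
                 - funk_F (tangent_cone T z) x ((1 - l) *\<^sub>R z + l *\<^sub>R y)) \<longlongrightarrow> 0) (at_right 0)"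
proof -
  have tc: "open_cone (tangent_cone T z)" by (rule tc_open_cone[OF T z])
  have sub: "T \<subseteq> tangent_cone T z" by (rule T_sub_tc[OF T z])
  have xt: "x \<in> tangent_cone T z" using x sub by blast
  have yt: "y \<in> tangent_cone T z" using y sub by blast
  define c where "c = funk_M (tangent_cone T z) x y"
  have c: "c > 0" unfolding c_def by (rule M_pos[OF tc yt xt])
  have key: "eventually (\<lambda>l. \<bar>funk_F T x ((1 - l) *\<^sub>R z + l *\<^sub>R y)
                 - funk_F (tangent_cone T z) x ((1 - l) *\<^sub>R z + l *\<^sub>R y)\<bar> < e) (at_right 0)"
    if e: "e > 0" for e
  proof -
    define \<epsilon> where "\<epsilon> = c * e / 2"
    have \<epsilon>: "\<epsilon> > 0" using c e by (simp add: \<epsilon>_def)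
    have yz: "y - z \<in> tangent_cone T z" using tc_memI[of 1 y T z] y by simp
    have "funk_M (tangent_cone T z) x (y - z) < c + \<epsilon>" using M_tc_yz[OF T z] \<epsilon> by (simp add: c_def)
    from M_above[OF tc yz this] have "(c + \<epsilon>) *\<^sub>R (y - z) - x \<in> tangent_cone T z" .
    then obtain \<mu> w where mw: "\<mu> > 0" "w \<in> T" "(c + \<epsilon>) *\<^sub>R (y - z) - x = \<mu> *\<^sub>R (w - z)"
      by (rule tc_memE)
    show ?thesis unfolding eventually_at_right_field
    proof (intro exI[of _ "min 1 ((c + \<epsilon>) / \<mu>)"] conjI allI impI)
      show "0 < min 1 ((c + \<epsilon>) / \<mu>)" using \<epsilon> c mw by simp
      fix l :: real assume l: "0 < l" "l < min 1 ((c + \<epsilon>) / \<mu>)"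
      define yl where "yl = (1 - l) *\<^sub>R z + l *\<^sub>R y"
      have ylT: "yl \<in> T" using yl_T[OF T z y l(1)] l by (simp add: yl_def)
      define a where "a = (c + \<epsilon>) / l"
      have al: "a * l = c + \<epsilon>" using l by (simp add: a_def)
      have a0: "a > 0" using l c \<epsilon> by (simp add: a_def)
      have "l * \<mu> < c + \<epsilon>" using l mw(1) by (simp add: pos_less_divide_eq)
      then have amu: "\<mu> \<le> a" using l by (simp add: a_def pos_le_divide_eq mult.commute)
      have e0: "(c + \<epsilon>) *\<^sub>R y - x = ((c + \<epsilon>) *\<^sub>R (y - z) - x) + (c + \<epsilon>) *\<^sub>R z"
        by (simp add: algebra_simps)
      have e1: "(c + \<epsilon>) *\<^sub>R y - x = \<mu> *\<^sub>R w - \<mu> *\<^sub>R z + (c + \<epsilon>) *\<^sub>R z"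
        unfolding e0 mw(3) by (simp add: algebra_simps)
      have coef: "a * (1 - l) + (c + \<epsilon>) - \<mu> = a - \<mu>" using al by (simp add: right_diff_distrib)
      have "a *\<^sub>R yl - x = (a * (1 - l)) *\<^sub>R z + ((a * l) *\<^sub>R y - x)"
        by (simp add: yl_def algebra_simps)
      also have "\<dots> = (a * (1 - l)) *\<^sub>R z + ((c + \<epsilon>) *\<^sub>R y - x)" by (simp only: al)
      also have "\<dots> = (a * (1 - l)) *\<^sub>R z + (\<mu> *\<^sub>R w - \<mu> *\<^sub>R z + (c + \<epsilon>) *\<^sub>R z)" by (simp only: e1)
      also have "\<dots> = \<mu> *\<^sub>R w + (a * (1 - l) + (c + \<epsilon>) - \<mu>) *\<^sub>R z" by (simp add: algebra_simps)
      also have "\<dots> = \<mu> *\<^sub>R w + (a - \<mu>) *\<^sub>R z" by (simp only: coef)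
      finally have aT: "a *\<^sub>R yl - x = \<mu> *\<^sub>R w + (a - \<mu>) *\<^sub>R z" .
      have "\<mu> *\<^sub>R w \<in> T" by (rule oc_basic(4)[OF T mw(1,2)])
      moreover have "(a - \<mu>) *\<^sub>R z \<in> closure T"
        using amu by (intro oc_closure_scale[OF T _ fr_props(1)[OF T z]]) simp
      ultimately have "a *\<^sub>R yl - x \<in> T" unfolding aT by (rule oc_add[OF T])
      then have up: "funk_M T x yl \<le> a" using closure_subset by (intro M_lower[OF a0]) blast
      have low: "funk_M (tangent_cone T z) x yl \<le> funk_M T x yl"
        by (rule M_mono[OF T ylT closure_mono[OF sub]])
      have eqc: "funk_M (tangent_cone T z) x yl = c / l"
        using M_tc_yl[OF T z y l(1), of x] by (simp add: yl_def c_def)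
      have q: "c / l > 0" using c l by simp
      have "a = (c / l) * (1 + e/2)" using l by (simp add: a_def \<epsilon>_def field_simps)
      then have "\<bar>ln (funk_M T x yl) - ln (c / l)\<bar> < e"
        using ln_sandwich[OF q _ _ e, of "funk_M T x yl"] up low eqc by simp
      then show "\<bar>funk_F T x ((1 - l) *\<^sub>R z + l *\<^sub>R y)
                 - funk_F (tangent_cone T z) x ((1 - l) *\<^sub>R z + l *\<^sub>R y)\<bar> < e"
        unfolding funk_F_def yl_def[symmetric] eqc .
    qed
  qed
  show ?thesis unfolding tendsto_iff dist_real_def using key by simp
qed

lemma part_ii:
  assumes T: "open_cone T" and z: "z \<in> frontier T" and b: "b \<in> T" and y: "y \<in> T" and w: "w \<in> T"
  shows "((\<lambda>l. funk_F T w ((1 - l) *\<^sub>R z + l *\<^sub>R y) - funk_F T b ((1 - l) *\<^sub>R z + l *\<^sub>R y))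
                 \<longlongrightarrow> funk_f (tangent_cone T z) b y w) (at_right 0)"
proof -
  have tc: "open_cone (tangent_cone T z)" by (rule tc_open_cone[OF T z])
  have sub: "T \<subseteq> tangent_cone T z" by (rule T_sub_tc[OF T z])
  define D where "D x l = funk_F T x ((1 - l) *\<^sub>R z + l *\<^sub>R y)
                 - funk_F (tangent_cone T z) x ((1 - l) *\<^sub>R z + l *\<^sub>R y)" for x l
  define K where "K = funk_F (tangent_cone T z) w y - funk_F (tangent_cone T z) b y"
  have lim: "((\<lambda>l. D w l - D b l + K) \<longlongrightarrow> 0 - 0 + K) (at_right 0)"
    unfolding D_def by (rule tendsto_add[OF tendsto_diff[OF part_i[OF T z w y] part_i[OF T z b y]] tendsto_const])
  have Fl: "funk_F (tangent_cone T z) x ((1 - l) *\<^sub>R z + l *\<^sub>R y) = funk_F (tangent_cone T z) x y - ln l"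
    if "x \<in> T" "0 < l" for x l
  proof -
    have "funk_M (tangent_cone T z) x y > 0" using M_pos[OF tc] sub that(1) y by blast
    then show ?thesis unfolding funk_F_def M_tc_yl[OF T z y that(2)] using that(2) by (simp add: ln_div)
  qed
  have ev: "eventually (\<lambda>l. D w l - D b l + K = funk_F T w ((1 - l) *\<^sub>R z + l *\<^sub>R y) - funk_F T b ((1 - l) *\<^sub>R z + l *\<^sub>R y)) (at_right 0)"
    unfolding eventually_at_right_field
    by (rule exI[of _ 1]) (auto simp: D_def K_def Fl[OF w] Fl[OF b])
  from Lim_transform_eventually[OF lim ev] show ?thesis by (simp add: funk_f_def K_def)
qed

lemma tc_f_repr:
  assumes T: "open_cone T" and z: "z \<in> frontier T" and b: "b \<in> T" and p: "p \<in> tangent_cone T z"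
  shows "\<exists>w\<in>T. \<forall>x\<in>T. funk_f (tangent_cone T z) b p x = funk_f (tangent_cone T z) b w x"
proof -
  have tc: "open_cone (tangent_cone T z)" by (rule tc_open_cone[OF T z])
  have sub: "T \<subseteq> tangent_cone T z" by (rule T_sub_tc[OF T z])
  obtain \<mu> w where mw: "\<mu> > 0" "w \<in> T" "p = \<mu> *\<^sub>R (w - z)" using p by (rule tc_memE)
  have wz: "w - z \<in> tangent_cone T z" using tc_memI[of 1 w T z] mw by simp
  have F: "funk_F (tangent_cone T z) x p = funk_F (tangent_cone T z) x w - ln \<mu>" if x: "x \<in> T" for x
  proof -
    have "funk_M (tangent_cone T z) x p = funk_M (tangent_cone T z) x w / \<mu>"
      unfolding mw(3) M_scale[OF tc wz mw(1)] M_tc_yz[OF T z] ..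
    moreover have "funk_M (tangent_cone T z) x w > 0" using M_pos[OF tc] sub x mw(2) by blast
    ultimately show ?thesis unfolding funk_F_def using mw(1) by (simp add: ln_div)
  qed
  show ?thesis using mw(2) by (intro bexI[of _ w] ballI) (simp_all add: funk_f_def F b)
qed

lemma yl_lim:
  fixes z y :: "'a::real_normed_vector"
  shows "((\<lambda>l. (1 - l) *\<^sub>R z + l *\<^sub>R y) \<longlongrightarrow> z) (at_right (0::real))"
proof -
  have a: "((\<lambda>l. 1 - l) \<longlongrightarrow> 1 - 0) (at_right (0::real))"
    by (rule tendsto_diff[OF tendsto_const tendsto_ident_at])
  have b: "((\<lambda>l. l) \<longlongrightarrow> 0) (at_right (0::real))"
    by (rule tendsto_ident_at)
  have "((\<lambda>l. (1 - l) *\<^sub>R z + l *\<^sub>R y) \<longlongrightarrow> (1 - 0) *\<^sub>R z + 0 *\<^sub>R y) (at_right (0::real))"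
    by (rule tendsto_add[OF tendsto_scaleR[OF a tendsto_const] tendsto_scaleR[OF b tendsto_const]])
  then show ?thesis by simp
qed

lemma approx:
  assumes T: "open_cone T" and z: "z \<in> frontier T" and b: "b \<in> T"
    and g: "g \<in> pw_closure T (funk_K (tangent_cone T z) b)"
    and P: "P \<subseteq> T" "finite P" and e: "e > 0"
  shows "\<exists>q\<in>T. dist q z < e \<and> (\<forall>x\<in>P. \<bar>funk_f T b q x - g x\<bar> < e)"
proof -
  have e2: "e/2 > 0" using e by simp
  obtain h where h: "h \<in> funk_K (tangent_cone T z) b" "\<forall>x\<in>P. \<bar>h x - g x\<bar> < e/2"
    using g P e2 unfolding pw_closure_def by blast
  obtain p where p: "p \<in> tangent_cone T z" "h = funk_f (tangent_cone T z) b p"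
    using h(1) unfolding funk_K_def by blast
  obtain w where w: "w \<in> T" "\<forall>x\<in>T. funk_f (tangent_cone T z) b p x = funk_f (tangent_cone T z) b w x"
    using tc_f_repr[OF T z b p(1)] by blast
  have ev1: "eventually (\<lambda>l. \<forall>x\<in>P. \<bar>(funk_F T x ((1 - l) *\<^sub>R z + l *\<^sub>R w) - funk_F T b ((1 - l) *\<^sub>R z + l *\<^sub>R w))
               - funk_f (tangent_cone T z) b w x\<bar> < e/2) (at_right 0)"
  proof (rule eventually_ball_finite[OF P(2)], rule ballI)
    fix x assume "x \<in> P"
    then have x: "x \<in> T" using P by blast
    have "\<forall>\<epsilon>>0. eventually (\<lambda>l. \<bar>(funk_F T x ((1 - l) *\<^sub>R z + l *\<^sub>R w) - funk_F T b ((1 - l) *\<^sub>R z + l *\<^sub>R w))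
               - funk_f (tangent_cone T z) b w x\<bar> < \<epsilon>) (at_right 0)"
      using part_ii[OF T z b w(1) x] unfolding tendsto_iff dist_real_def .
    then show "eventually (\<lambda>l. \<bar>(funk_F T x ((1 - l) *\<^sub>R z + l *\<^sub>R w) - funk_F T b ((1 - l) *\<^sub>R z + l *\<^sub>R w))
               - funk_f (tangent_cone T z) b w x\<bar> < e/2) (at_right 0)"
      using e2 by blast
  qed
  have ev2: "eventually (\<lambda>l. dist ((1 - l) *\<^sub>R z + l *\<^sub>R w) z < e) (at_right 0)"
    using yl_lim[of z w] e unfolding tendsto_iff by blast
  have ev3: "eventually (\<lambda>l::real. 0 < l \<and> l < 1) (at_right 0)"
    unfolding eventually_at_right_field by (rule exI[of _ 1]) auto
  have "eventually (\<lambda>l. (\<forall>x\<in>P. \<bar>(funk_F T x ((1 - l) *\<^sub>R z + l *\<^sub>R w) - funk_F T b ((1 - l) *\<^sub>R z + l *\<^sub>R w))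
               - funk_f (tangent_cone T z) b w x\<bar> < e/2) \<and> dist ((1 - l) *\<^sub>R z + l *\<^sub>R w) z < e \<and> 0 < l \<and> l < 1) (at_right 0)"
    by (rule eventually_conj[OF ev1 eventually_conj[OF ev2 ev3]])
  then obtain bb where bb: "bb > 0" "\<forall>l>0. l < bb \<longrightarrow> (\<forall>x\<in>P. \<bar>(funk_F T x ((1 - l) *\<^sub>R z + l *\<^sub>R w) - funk_F T b ((1 - l) *\<^sub>R z + l *\<^sub>R w))
               - funk_f (tangent_cone T z) b w x\<bar> < e/2) \<and> dist ((1 - l) *\<^sub>R z + l *\<^sub>R w) z < e \<and> 0 < l \<and> l < 1"
    unfolding eventually_at_right_field by blast
  define l where "l = bb / 2"
  have l: "0 < l" "l < bb" using bb(1) by (auto simp: l_def)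
  define q where "q = (1 - l) *\<^sub>R z + l *\<^sub>R w"
  have Q: "(\<forall>x\<in>P. \<bar>(funk_F T x q - funk_F T b q) - funk_f (tangent_cone T z) b w x\<bar> < e/2)"
      "dist q z < e" "0 < l" "l < 1"
    using bb(2) l unfolding q_def by blast+
  have qT: "q \<in> T" unfolding q_def using yl_T[OF T z w(1) Q(3)] Q(4) by simp
  show ?thesis
  proof (intro bexI[OF _ qT] conjI ballI)
    show "dist q z < e" by (rule Q(2))
    fix x assume x: "x \<in> P"
    have a3: "h x = funk_f (tangent_cone T z) b w x" using p(2) w(2) x P by auto
    have a1: "\<bar>(funk_F T x q - funk_F T b q) - funk_f (tangent_cone T z) b w x\<bar> < e/2" using Q(1) x by blast
    have a2: "\<bar>h x - g x\<bar> < e/2" using h(2) x by blast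
    have e1: "funk_f T b q x = funk_F T x q - funk_F T b q" by (simp add: funk_f_def)
    show "\<bar>funk_f T b q x - g x\<bar> < e" unfolding e1 using a1 a2 a3 by linarith
  qed
qed

lemma iii_closure:
  assumes T: "open_cone T" and z: "z \<in> frontier T" and b: "b \<in> T"
    and g: "g \<in> pw_closure T (funk_K (tangent_cone T z) b)"
  shows "g \<in> pw_closure T (funk_K T b)"
  unfolding pw_closure_def
proof (intro CollectI allI impI)
  fix P :: "'a set" and e :: real assume P: "P \<subseteq> T" "finite P" and e: "e > 0"
  obtain q where q: "q \<in> T" "\<forall>x\<in>P. \<bar>funk_f T b q x - g x\<bar> < e"
    using approx[OF T z b g P e] by blast
  have "funk_f T b q \<in> funk_K T b" unfolding funk_K_def using q(1) by blast
  then show "\<exists>h\<in>funk_K T b. \<forall>x\<in>P. \<bar>h x - g x\<bar> < e" using q(2) by blast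
qed

lemma LIP:
  assumes T: "open_cone T" and S: "open_cone S" and TS: "T \<subseteq> S"
    and w: "w \<in> T" and w': "w' \<in> T" and p: "p \<in> S"
  shows "funk_f S b p w - funk_f S b p w' \<le> funk_F T w w'"
proof -
  have wS: "w \<in> S" "w' \<in> S" using w w' TS by auto
  have p1: "funk_M S w p > 0" by (rule M_pos[OF S p wS(1)])
  have p2: "funk_M T w w' > 0" by (rule M_pos[OF T w' w])
  have p3: "funk_M S w' p > 0" by (rule M_pos[OF S p wS(2)])
  have "funk_M S w p \<le> funk_M T w w' * funk_M S w' p" by (rule M_triangle[OF T S TS w w' p])
  then have "ln (funk_M S w p) \<le> ln (funk_M T w w' * funk_M S w' p)" using p1 p2 p3 by simp
  also have "\<dots> = ln (funk_M T w w') + ln (funk_M S w' p)" using p2 p3 by (simp add: ln_mult)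
  finally show ?thesis unfolding funk_f_def funk_F_def by simp
qed

lemma g_LIP:
  assumes T: "open_cone T" and z: "z \<in> frontier T"
    and g: "g \<in> pw_closure T (funk_K (tangent_cone T z) b)"
    and w: "w \<in> T" and w': "w' \<in> T"
  shows "g w - g w' \<le> funk_F T w w'"
proof (rule ccontr)
  assume "\<not> ?thesis"
  then have d: "g w - g w' - funk_F T w w' > 0" by simp
  define e where "e = (g w - g w' - funk_F T w w') / 2"
  have e: "e > 0" using d by (simp add: e_def)
  obtain h where h: "h \<in> funk_K (tangent_cone T z) b" "\<forall>x\<in>{w, w'}. \<bar>h x - g x\<bar> < e"
  proof -
    have "{w, w'} \<subseteq> T" "finite {w, w'}" using w w' by auto
    then show ?thesis using that g e unfolding pw_closure_def by blast
  qed
  obtain p where p: "p \<in> tangent_cone T z" "h = funk_f (tangent_cone T z) b p"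
    using h(1) unfolding funk_K_def by blast
  have "h w - h w' \<le> funk_F T w w'"
    unfolding p(2) by (rule LIP[OF T tc_open_cone[OF T z] T_sub_tc[OF T z] w w' p(1)])
  moreover have "\<bar>h w - g w\<bar> < e" "\<bar>h w' - g w'\<bar> < e" using h(2) by auto
  ultimately have "- e < h w - g w" "h w' - g w' < e" by (auto simp: abs_less_iff)
  moreover have "2 * e = g w - g w' - funk_F T w w'" by (simp add: e_def)
  ultimately show False using \<open>h w - h w' \<le> funk_F T w w'\<close> by linarith
qed

lemma CONT:
  assumes T: "open_cone T" and w: "w \<in> T" and \<epsilon>: "\<epsilon> > 0"
  shows "\<exists>\<delta>>0. \<forall>d\<in>T. dist d w < \<delta> \<longrightarrow> funk_F T w d \<le> \<epsilon> \<and> funk_F T d w \<le> \<epsilon>"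
proof -
  define k where "k = exp \<epsilon> - 1"
  have k: "k > 0" using \<epsilon> by (simp add: k_def)
  have kw: "k *\<^sub>R w \<in> T" by (rule oc_basic(4)[OF T k w])
  obtain r where r: "r > 0" "ball (k *\<^sub>R w) r \<subseteq> T"
    using open_contains_ball oc_basic(2)[OF T] kw by blast
  have lnk: "ln (1 + k) = \<epsilon>" by (simp add: k_def)
  show ?thesis
  proof (intro exI[of _ "r / (1 + k)"] conjI ballI impI)
    show "r / (1 + k) > 0" using r k by simp
    fix d assume d: "d \<in> T" "dist d w < r / (1 + k)"
    have nd: "norm (d - w) * (1 + k) < r" using d(2) k by (simp add: dist_norm pos_less_divide_eq)
    have "(1 + k) *\<^sub>R d - w = k *\<^sub>R w + (1 + k) *\<^sub>R (d - w)" by (simp add: algebra_simps)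
    moreover have "norm ((1 + k) *\<^sub>R (d - w)) < r" using nd k by (simp add: mult.commute)
    ultimately have "(1 + k) *\<^sub>R d - w \<in> T" using r by (auto simp: dist_norm)
    then have m1: "funk_M T w d \<le> 1 + k" using k closure_subset by (intro M_lower) auto
    have "norm (d - w) * 1 \<le> norm (d - w) * (1 + k)" by (rule mult_left_mono) (use k in auto)
    moreover have "norm (w - d) = norm (d - w)" by (rule norm_minus_commute)
    ultimately have "norm (w - d) * 1 \<le> norm (d - w) * (1 + k)" by simp
    then have nwd: "norm (w - d) < r" using nd by simp
    have eqv: "(1 + k) *\<^sub>R w - d = k *\<^sub>R w + (w - d)" by (simp add: algebra_simps)
    have dd: "dist (k *\<^sub>R w) (k *\<^sub>R w + (w - d)) = norm (w - d)" unfolding dist_commute[of "k *\<^sub>R w"] dist_norm by simp (rule norm_minus_commute)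
    have "dist (k *\<^sub>R w) ((1 + k) *\<^sub>R w - d) < r" unfolding eqv dd by (rule nwd)
    then have "(1 + k) *\<^sub>R w - d \<in> ball (k *\<^sub>R w) r" by (simp only: mem_ball)
    then have "(1 + k) *\<^sub>R w - d \<in> T" using r by blast
    then have m2: "funk_M T d w \<le> 1 + k" using k closure_subset by (intro M_lower) auto
    have q1: "funk_M T w d > 0" by (rule M_pos[OF T d(1) w])
    have q2: "funk_M T d w > 0" by (rule M_pos[OF T w d(1)])
    show "funk_F T w d \<le> \<epsilon>" unfolding funk_F_def lnk[symmetric] using m1 q1 k by simp
    show "funk_F T d w \<le> \<epsilon>" unfolding funk_F_def lnk[symmetric] using m2 q2 k by simp
  qed
qed

lemma g_inv:
  assumes T: "open_cone T" and z: "z \<in> frontier T"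
    and g: "g \<in> pw_closure T (funk_K (tangent_cone T z) b)"
    and x: "x \<in> T" and s: "s \<ge> 0"
  shows "g (x + s *\<^sub>R z) = g x"
proof (rule ccontr)
  assume ne: "g (x + s *\<^sub>R z) \<noteq> g x"
  define x' where "x' = x + s *\<^sub>R z"
  have x': "x' \<in> T" unfolding x'_def
    by (rule oc_add[OF T x oc_closure_scale[OF T s fr_props(1)[OF T z]]])
  define e where "e = \<bar>g x' - g x\<bar> / 2"
  have e: "e > 0" using ne by (simp add: e_def x'_def)
  have "{x', x} \<subseteq> T" "finite {x', x}" using x x' by auto
  then obtain h where h: "h \<in> funk_K (tangent_cone T z) b" "\<forall>y\<in>{x', x}. \<bar>h y - g y\<bar> < e"
    using g e unfolding pw_closure_def by blast
  obtain p where p: "p \<in> tangent_cone T z" "h = funk_f (tangent_cone T z) b p"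
    using h(1) unfolding funk_K_def by blast
  have "funk_M (tangent_cone T z) (x + s *\<^sub>R z) (p + 0 *\<^sub>R z) = funk_M (tangent_cone T z) x p"
    by (rule M_tc_lin[OF T z])
  then have "h x' = h x" unfolding p(2) funk_f_def funk_F_def x'_def by simp
  moreover have a1: "\<bar>h x' - g x'\<bar> < e" "\<bar>h x - g x\<bar> < e" using h(2) by auto
  moreover have "\<bar>g x' - g x\<bar> \<le> \<bar>g x' - h x'\<bar> + \<bar>h x' - g x\<bar>" using abs_triangle_ineq[of "g x' - h x'" "h x' - g x"] by simp
  moreover have "\<bar>g x' - h x'\<bar> = \<bar>h x' - g x'\<bar>" by (rule abs_minus_commute)
  moreover have "2 * e = \<bar>g x' - g x\<bar>" by (simp add: e_def)
  ultimately show False by linarith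
qed

lemma not_K:
  assumes T: "open_cone T" and z: "z \<in> frontier T" and b: "b \<in> T"
    and nz: "z \<notin> zero_part T"
    and g: "g \<in> pw_closure T (funk_K (tangent_cone T z) b)"
  shows "\<not> (\<exists>q\<in>T. \<forall>w\<in>T. g w = funk_f T b q w)"
proof
  assume "\<exists>q\<in>T. \<forall>w\<in>T. g w = funk_f T b q w"
  then obtain q where q: "q \<in> T" "\<forall>w\<in>T. g w = funk_f T b q w" by blast
  define C where "C = funk_M T b q"
  have zc: "z \<in> closure T" by (rule fr_props(1)[OF T z])
  have mem: "inverse (real (Suc n)) *\<^sub>R ((C + 1) *\<^sub>R q - b) - z \<in> T" for n
  proof -
    define s where "s = real (Suc n)"
    have s: "s > 0" by (simp add: s_def)
    have xn: "b + s *\<^sub>R z \<in> T" by (rule oc_add[OF T b oc_closure_scale[OF T _ zc]]) (use s in simp)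
    have "g (b + s *\<^sub>R z) = g b" by (rule g_inv[OF T z g b]) (use s in simp)
    then have "funk_f T b q (b + s *\<^sub>R z) = funk_f T b q b" using q(2) xn b by simp
    then have "ln (funk_M T (b + s *\<^sub>R z) q) = ln (funk_M T b q)" unfolding funk_f_def funk_F_def by simp
    moreover have "funk_M T (b + s *\<^sub>R z) q > 0" by (rule M_pos[OF T q(1) xn])
    moreover have "funk_M T b q > 0" by (rule M_pos[OF T q(1) b])
    ultimately have "funk_M T (b + s *\<^sub>R z) q = C" unfolding C_def by simp
    then have "funk_M T (b + s *\<^sub>R z) q < C + 1" by simp
    from M_above[OF T q(1) this] have "(C + 1) *\<^sub>R q - (b + s *\<^sub>R z) \<in> T" .
    then have "inverse s *\<^sub>R ((C + 1) *\<^sub>R q - (b + s *\<^sub>R z)) \<in> T"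
      by (intro oc_basic(4)[OF T]) (use s in simp_all)
    moreover have "inverse s *\<^sub>R ((C + 1) *\<^sub>R q - (b + s *\<^sub>R z)) = inverse s *\<^sub>R ((C + 1) *\<^sub>R q - b) - z"
      using s by (simp add: scaleR_diff_right scaleR_add_right)
    ultimately show ?thesis by (simp add: s_def)
  qed
  have lim: "(\<lambda>n. inverse (real (Suc n)) *\<^sub>R ((C + 1) *\<^sub>R q - b) - z) \<longlonglongrightarrow> 0 *\<^sub>R ((C + 1) *\<^sub>R q - b) - z"
    by (rule tendsto_diff[OF tendsto_scaleR[OF LIMSEQ_inverse_real_of_nat tendsto_const] tendsto_const])
  have "- z \<in> closure T"
    using seq_closure[of "\<lambda>n. inverse (real (Suc n)) *\<^sub>R ((C + 1) *\<^sub>R q - b) - z", OF mem] lim by simp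
  then have "z \<in> uminus ` closure T" by (metis image_eqI minus_minus)
  with zc nz show False unfolding zero_part_def by blast
qed

lemma inv_mono: "N \<le> n \<Longrightarrow> inverse (real (Suc n)) \<le> inverse (real (Suc N))"
  by (rule le_imp_inverse_le) auto

lemma seq_exists:
  assumes T: "open_cone T" and z: "z \<in> frontier T" and b: "b \<in> T"
    and g: "g \<in> pw_closure T (funk_K (tangent_cone T z) b)"
  shows "\<exists>xs. (\<forall>n. xs n \<in> T) \<and> xs \<longlonglongrightarrow> z \<and> funk_conv T b xs g"
proof -
  obtain D0 :: "'a set" where D0: "countable D0" "\<And>U. open U \<Longrightarrow> U \<noteq> {} \<Longrightarrow> \<exists>y\<in>D0. y \<in> U"
    using countable_dense_exists by blast
  define D where "D = D0 \<inter> T"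
  have Dne: "D \<noteq> {}" using D0(2)[OF oc_basic(2)[OF T] oc_basic(1)[OF T]] by (auto simp: D_def)
  have Dc: "countable D" using D0(1) by (simp add: D_def)
  define dd where "dd = from_nat_into D"
  have ddT: "dd i \<in> T" for i using from_nat_into[OF Dne, of i] by (simp add: dd_def D_def)
  have dense: "\<exists>i. dist (dd i) w < \<delta>" if w: "w \<in> T" and \<delta>: "\<delta> > 0" for w \<delta>
  proof -
    have "open (ball w \<delta> \<inter> T)" using oc_basic(2)[OF T] by auto
    moreover have "ball w \<delta> \<inter> T \<noteq> {}" using w \<delta> centre_in_ball[of w \<delta>] by blast
    ultimately obtain y where y: "y \<in> D0" "y \<in> ball w \<delta> \<inter> T" using D0(2) by blast
    then have "y \<in> range dd" unfolding dd_def range_from_nat_into[OF Dne Dc] by (simp add: D_def)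
    then obtain i where "y = dd i" by blast
    then show ?thesis using y(2) by (auto simp: dist_commute)
  qed
  have ex: "\<forall>n. \<exists>q. q \<in> T \<and> dist q z < inverse (real (Suc n)) \<and>
      (\<forall>x\<in>dd ` {..n}. \<bar>funk_f T b q x - g x\<bar> < inverse (real (Suc n)))"
  proof
    fix n
    have P: "dd ` {..n} \<subseteq> T" "finite (dd ` {..n})" using ddT by auto
    have "\<exists>q\<in>T. dist q z < inverse (real (Suc n)) \<and>
      (\<forall>x\<in>dd ` {..n}. \<bar>funk_f T b q x - g x\<bar> < inverse (real (Suc n)))"
      by (rule approx[OF T z b g P]) simp
    then show "\<exists>q. q \<in> T \<and> dist q z < inverse (real (Suc n)) \<and>
      (\<forall>x\<in>dd ` {..n}. \<bar>funk_f T b q x - g x\<bar> < inverse (real (Suc n)))" by blast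
  qed
  from choice[OF ex] obtain xs where xs: "\<forall>n. xs n \<in> T \<and> dist (xs n) z < inverse (real (Suc n)) \<and>
      (\<forall>x\<in>dd ` {..n}. \<bar>funk_f T b (xs n) x - g x\<bar> < inverse (real (Suc n)))" by blast
  have xsT: "\<forall>n. xs n \<in> T" using xs by blast
  have lim: "xs \<longlonglongrightarrow> z" unfolding lim_sequentially
  proof (intro allI impI)
    fix r :: real assume r: "r > 0"
    obtain N where N: "inverse (real (Suc N)) < r" using reals_Archimedean[OF r] by auto
    show "\<exists>no. \<forall>n\<ge>no. dist (xs n) z < r"
    proof (intro exI allI impI)
      fix n assume "N \<le> n"
      then have "inverse (real (Suc n)) \<le> inverse (real (Suc N))" by (rule inv_mono)
      moreover have "dist (xs n) z < inverse (real (Suc n))" using xs by blast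
      ultimately show "dist (xs n) z < r" using N by linarith
    qed
  qed
  have conv: "funk_conv T b xs g" unfolding funk_conv_def
  proof (intro ballI)
    fix w assume w: "w \<in> T"
    show "(\<lambda>n. funk_F T w (xs n) - funk_F T b (xs n)) \<longlonglongrightarrow> g w" unfolding lim_sequentially dist_real_def
    proof (intro allI impI)
      fix r :: real assume r: "r > 0"
      define \<epsilon> where "\<epsilon> = r / 4"
      have \<epsilon>: "\<epsilon> > 0" using r by (simp add: \<epsilon>_def)
      obtain \<delta> where \<delta>: "\<delta> > 0" "\<forall>d\<in>T. dist d w < \<delta> \<longrightarrow> funk_F T w d \<le> \<epsilon> \<and> funk_F T d w \<le> \<epsilon>"
        using CONT[OF T w \<epsilon>] by blast
      obtain i where i: "dist (dd i) w < \<delta>" using dense[OF w \<delta>(1)] by blast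
      define d where "d = dd i"
      have dT: "d \<in> T" by (simp add: d_def ddT)
      have Fwd: "funk_F T w d \<le> \<epsilon>" "funk_F T d w \<le> \<epsilon>" using \<delta>(2) dT i by (auto simp: d_def)
      obtain N where N: "inverse (real (Suc N)) < \<epsilon>" using reals_Archimedean[OF \<epsilon>] by auto
      show "\<exists>no. \<forall>n\<ge>no. \<bar>funk_F T w (xs n) - funk_F T b (xs n) - g w\<bar> < r"
      proof (intro exI[of _ "max i N"] allI impI)
        fix n assume n: "max i N \<le> n"
        have dn: "d \<in> dd ` {..n}" using n by (auto simp: d_def)
        have "\<bar>funk_f T b (xs n) d - g d\<bar> < inverse (real (Suc n))" using xs dn by blast
        moreover have "inverse (real (Suc n)) \<le> inverse (real (Suc N))" using n by (intro inv_mono) simp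
        ultimately have a1: "\<bar>funk_f T b (xs n) d - g d\<bar> < \<epsilon>" using N by linarith
        have a2: "funk_f T b (xs n) w - funk_f T b (xs n) d \<le> funk_F T w d"
          by (rule LIP[OF T T subset_refl w dT xsT[rule_format]])
        have a3: "funk_f T b (xs n) d - funk_f T b (xs n) w \<le> funk_F T d w"
          by (rule LIP[OF T T subset_refl dT w xsT[rule_format]])
        have a4: "g w - g d \<le> funk_F T w d" by (rule g_LIP[OF T z g w dT])
        have a5: "g d - g w \<le> funk_F T d w" by (rule g_LIP[OF T z g dT w])
        have e1: "funk_f T b (xs n) w = funk_F T w (xs n) - funk_F T b (xs n)" by (simp add: funk_f_def)
        have a1': "funk_f T b (xs n) d - g d < \<epsilon>" "- \<epsilon> < funk_f T b (xs n) d - g d"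
          using a1 by (auto simp: abs_less_iff)
        have r4: "r = 4 * \<epsilon>" by (simp add: \<epsilon>_def)
        have "funk_F T w (xs n) - funk_F T b (xs n) - g w < r" "- r < funk_F T w (xs n) - funk_F T b (xs n) - g w"
          using a1' a2 a3 a4 a5 Fwd r4 e1 \<epsilon> by linarith+
        then show "\<bar>funk_F T w (xs n) - funk_F T b (xs n) - g w\<bar> < r" by (simp add: abs_less_iff)
      qed
    qed
  qed
  show ?thesis using xsT lim conv by blast
qed

theorem mainTheorem12:
  fixes T :: "'a::euclidean_space set" and b x y z :: 'a
  assumes "open_cone T" and "b \<in> T" and "x \<in> T" and "y \<in> T" and "z \<in> frontier T"
  shows "((\<lambda>l. funk_F T x ((1 - l) *\<^sub>R z + l *\<^sub>R y)
                 - funk_F (tangent_cone T z) x ((1 - l) *\<^sub>R z + l *\<^sub>R y)) \<longlongrightarrow> 0) (at_right 0) \<and>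
         (\<forall>w\<in>T. ((\<lambda>l. funk_F T w ((1 - l) *\<^sub>R z + l *\<^sub>R y) - funk_F T b ((1 - l) *\<^sub>R z + l *\<^sub>R y))
                 \<longlongrightarrow> funk_f (tangent_cone T z) b y w) (at_right 0)) \<and>
         (z \<notin> zero_part T \<longrightarrow>
           pw_closure T (funk_K (tangent_cone T z) b) \<subseteq> pw_closure T (funk_K T b) \<inter> funk_A T b z)"
proof (intro conjI ballI impI)
  show "((\<lambda>l. funk_F T x ((1 - l) *\<^sub>R z + l *\<^sub>R y)
                 - funk_F (tangent_cone T z) x ((1 - l) *\<^sub>R z + l *\<^sub>R y)) \<longlongrightarrow> 0) (at_right 0)"
    by (rule part_i[OF assms(1,5,3,4)])
next
  fix w assume w: "w \<in> T"
  show "((\<lambda>l. funk_F T w ((1 - l) *\<^sub>R z + l *\<^sub>R y) - funk_F T b ((1 - l) *\<^sub>R z + l *\<^sub>R y))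
                 \<longlongrightarrow> funk_f (tangent_cone T z) b y w) (at_right 0)"
    by (rule part_ii[OF assms(1,5,2,4) w])
next
  assume nz: "z \<notin> zero_part T"
  show "pw_closure T (funk_K (tangent_cone T z) b) \<subseteq> pw_closure T (funk_K T b) \<inter> funk_A T b z"
  proof
    fix g assume g: "g \<in> pw_closure T (funk_K (tangent_cone T z) b)"
    have 1: "g \<in> pw_closure T (funk_K T b)" by (rule iii_closure[OF assms(1,5,2) g])
    obtain xs where xs: "\<forall>n. xs n \<in> T" "xs \<longlonglongrightarrow> z" "funk_conv T b xs g"
      using seq_exists[OF assms(1,5,2) g] by blast
    have 2: "\<not> (\<exists>p\<in>T. \<forall>w\<in>T. g w = funk_f T b p w)" by (rule not_K[OF assms(1,5,2) nz g])
    have "g \<in> funk_A T b z" unfolding funk_A_def funk_horofunction_def using xs 2 by blast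
    with 1 show "g \<in> pw_closure T (funk_K T b) \<inter> funk_A T b z" by blast
  qed
qed

end
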